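(* Let $\bm{X}\in\mathbb{R}^{d\times n}$, $1\le K\le\min\{n,d\}$, $h(\bm{P},\bm{Q})=-\langle\bm{P},\bm{X}^T\bm{Q}\rangle+\delta_{\mathcal{B}(n,K)}(\bm{P})+\delta_{{\rm St}(d,K)}(\bm{Q})$, and for $\beta>0$ let $\Psi_\beta(\bm{P},\bm{Q},\bm{Q}')=h(\bm{P},\bm{Q})+\frac\beta2\|\bm{Q}-\bm{Q}'\|_F^2$. If $(\bm{P},\bm{Q},\bm{Q}')\in\mathcal{B}(n,K)\times{\rm St}(d,K)\times\mathbb{R}^{d\times K}$ is a limiting critical point of $\Psi_\beta$, then $\bm{Q}=\bm{Q}'$. Moreover, $(\bm{P},\bm{Q},\bm{Q})$ is a limiting critical point of $\Psi_\beta$ if and only if $(\bm{P},\bm{Q})$ is a limiting critical point of $h$.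
   Context: ${\rm St}(d,K)=\{\bm{Q}\in\mathbb{R}^{d\times K}:\bm{Q}^T\bm{Q}=\bm{I}_K\}$; $\mathcal{B}(n,K)$ is the set of $n\times K$ matrices with entries in $\{\pm1\}$; $\langle\bm{A},\bm{B}\rangle=\operatorname{tr}(\bm{A}^T\bm{B})$; $\delta_{\mathcal{S}}$ is the indicator function. A limiting critical point of a proper lower semicontinuous function $f$ is a point $\bm{x}$ with $\bm{0}\in\partial f(\bm{x})$, where $\partial$ is the limiting subdifferential. *)

theory Defs
  imports "HOL-Analysis.Analysis"
begin

definition indic :: "'a set \<Rightarrow> 'a \<Rightarrow> ereal" where
  "indic S x = (if x \<in> S then 0 else \<infinity>)"

definition stiefel :: "(real^'k^'d) set" where
  "stiefel = {Q. transpose Q ** Q = mat 1}"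

definition sign_mats :: "(real^'k^'n) set" where
  "sign_mats = {P. \<forall>i j. P $ i $ j = 1 \<or> P $ i $ j = -1}"

text \<open>Frechet (regular) subdifferential of a proper extended-real function:
  v is a regular subgradient at x iff f x is finite and
  liminf_{y -> x, y ~= x} (f y - f x - <v, y - x>) / norm (y - x) >= 0,
  written out with epsilon/delta.\<close>
definition frechet_subdiff :: "('a::euclidean_space \<Rightarrow> ereal) \<Rightarrow> 'a \<Rightarrow> 'a set" where
  "frechet_subdiff f x = {v. \<bar>f x\<bar> \<noteq> \<infinity> \<and>
     (\<forall>e>0. \<exists>d>0. \<forall>y. norm (y - x) < d \<longrightarrow>
        f y \<ge> f x + ereal (v \<bullet> (y - x) - e * norm (y - x)))}"

definition limiting_subdiff :: "('a::euclidean_space \<Rightarrow> ereal) \<Rightarrow> 'a \<Rightarrow> 'a set" where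
  "limiting_subdiff f x = {v. \<bar>f x\<bar> \<noteq> \<infinity> \<and>
     (\<exists>xs vs. xs \<longlonglongrightarrow> x \<and> (\<lambda>k. f (xs k)) \<longlonglongrightarrow> f x \<and>
        (\<forall>k. vs k \<in> frechet_subdiff f (xs k)) \<and> vs \<longlonglongrightarrow> v)}"

definition limiting_critical :: "('a::euclidean_space \<Rightarrow> ereal) \<Rightarrow> 'a \<Rightarrow> bool" where
  "limiting_critical f x \<longleftrightarrow> 0 \<in> limiting_subdiff f x"

text \<open>h(P,Q) = -<P, X^T Q> + delta_B(P) + delta_St(Q); inner product on matrices
  is the Frobenius inner product tr(A^T B).\<close>
definition hfun :: "real^'n^'d \<Rightarrow> (real^'k^'n) \<times> (real^'k^'d) \<Rightarrow> ereal" where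
  "hfun X PQ = ereal (- (fst PQ \<bullet> (transpose X ** snd PQ)))
      + indic sign_mats (fst PQ) + indic stiefel (snd PQ)"

definition Psi :: "real^'n^'d \<Rightarrow> real \<Rightarrow>
    ((real^'k^'n) \<times> (real^'k^'d)) \<times> (real^'k^'d) \<Rightarrow> ereal" where
  "Psi X \<beta> z = hfun X (fst z) + ereal (\<beta> / 2 * (norm (snd (fst z) - snd z))\<^sup>2)"

end

theory Submission
  imports Defs
begin

lemma hfun_cases: "hfun X z = \<infinity> \<or> (\<exists>r. hfun X z = ereal r)"
  unfolding hfun_def indic_def by auto

lemma Psi_eq: "Psi X \<beta> x = hfun X (fst x) + ereal (\<beta> / 2 * (norm (snd (fst x) - snd x))\<^sup>2)"
  unfolding Psi_def by simp

lemma hfun_fin: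
  assumes "\<bar>Psi X \<beta> x\<bar> \<noteq> \<infinity>"
  shows "hfun X (fst x) = ereal (real_of_ereal (Psi X \<beta> x) - \<beta> / 2 * (norm (snd (fst x) - snd x))\<^sup>2)"
  using hfun_cases[of X "fst x"] assms unfolding Psi_eq by auto

lemma subA:
  assumes v: "v \<in> frechet_subdiff (Psi X \<beta>) x" and b: "\<beta> > 0"
  shows "snd v = \<beta> *\<^sub>R (snd x - snd (fst x))"
proof (rule ccontr)
  define u where "u = snd v - \<beta> *\<^sub>R (snd x - snd (fst x))"
  define D where "D = snd (fst x) - snd x"
  define n where "n = norm u"
  assume "snd v \<noteq> \<beta> *\<^sub>R (snd x - snd (fst x))"
  hence "u \<noteq> 0" unfolding u_def by simp
  hence n: "n > 0" unfolding n_def by simp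
  have fin: "\<bar>Psi X \<beta> x\<bar> \<noteq> \<infinity>" and
    ineq: "\<forall>e>0. \<exists>d>0. \<forall>y. norm (y - x) < d \<longrightarrow>
        Psi X \<beta> y \<ge> Psi X \<beta> x + ereal (v \<bullet> (y - x) - e * norm (y - x))"
    using v unfolding frechet_subdiff_def by auto
  obtain d where d: "d > 0" and dd: "\<forall>y. norm (y - x) < d \<longrightarrow>
        Psi X \<beta> y \<ge> Psi X \<beta> x + ereal (v \<bullet> (y - x) - n/4 * norm (y - x))"
    using ineq n by (metis divide_pos_pos zero_less_numeral)
  define t where "t = min (d / (2 * (n + 1))) (1 / (2 * \<beta>))"
  have t: "t > 0" using d n b unfolding t_def by auto
  have tb: "\<beta> * t \<le> 1/2" using b unfolding t_def by (auto simp: field_simps min_def)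
  have td: "t * n < d"
  proof -
    have "t \<le> d / (2 * (n + 1))" unfolding t_def by simp
    hence "t * n \<le> d / (2 * (n + 1)) * n" using n by (intro mult_right_mono) auto
    also have "\<dots> < d" using n d by (simp add: field_simps add_pos_pos)
    finally show ?thesis .
  qed
  define y where "y = (fst x, snd x + t *\<^sub>R u)"
  have yx: "y - x = (0, t *\<^sub>R u)" unfolding y_def by (simp add: prod_eq_iff)
  have nyx: "norm (y - x) = t * n" unfolding yx n_def using t by (simp add: norm_Pair)
  have h1: "Psi X \<beta> y \<ge> Psi X \<beta> x + ereal (v \<bullet> (y - x) - n/4 * norm (y - x))"
    using dd[rule_format, of y] td nyx by simp
  obtain r where r: "hfun X (fst x) = ereal r" using hfun_fin[OF fin] by blast
  have Py: "Psi X \<beta> y = ereal (r + \<beta> / 2 * (norm (D - t *\<^sub>R u))\<^sup>2)"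
    unfolding Psi_eq y_def D_def using r by (simp add: algebra_simps)
  have Px: "Psi X \<beta> x = ereal (r + \<beta> / 2 * (norm D)\<^sup>2)"
    unfolding Psi_eq D_def using r by simp
  have vyx: "v \<bullet> (y - x) = t * n^2 - t * \<beta> * (D \<bullet> u)"
  proof -
    have "v \<bullet> (y - x) = snd v \<bullet> (t *\<^sub>R u)" unfolding yx
      by (metis inner_Pair inner_zero_right add_0 prod.collapse)
    also have "snd v = u - \<beta> *\<^sub>R D" unfolding u_def D_def by (simp add: algebra_simps)
    finally show ?thesis unfolding n_def
      by (simp add: inner_diff_left power2_norm_eq_inner inner_commute algebra_simps)
  qed
  have nD: "(norm (D - t *\<^sub>R u))\<^sup>2 = (norm D)\<^sup>2 - 2 * t * (D \<bullet> u) + t^2 * n^2"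
    unfolding n_def power2_norm_eq_inner
    by (simp add: inner_diff_left inner_diff_right inner_commute algebra_simps power2_eq_square)
  have "r + \<beta> / 2 * (norm (D - t *\<^sub>R u))\<^sup>2 \<ge> r + \<beta> / 2 * (norm D)\<^sup>2 + (t * n^2 - t * \<beta> * (D \<bullet> u) - n/4 * (t * n))"
    using h1 unfolding Py Px vyx nyx by simp
  hence "\<beta> * t^2 * n^2 / 2 \<ge> t * n^2 - n/4 * (t * n)"
    unfolding nD by (simp add: algebra_simps)
  hence "t * ((\<beta> * t) * n^2 / 2) \<ge> t * (3/4 * n^2)"
    by (simp add: algebra_simps power2_eq_square)
  hence "(\<beta> * t) * n^2 / 2 \<ge> 3/4 * n^2" using t by simp
  moreover have "(\<beta> * t) * n^2 \<le> 1/2 * n^2" using tb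
    by (intro mult_right_mono) auto
  ultimately show False using n by (simp add: power2_eq_square)
qed

lemma subB:
  assumes v: "v \<in> frechet_subdiff (hfun X) z" and b: "\<beta> \<ge> 0"
  shows "(v, 0) \<in> frechet_subdiff (Psi X \<beta>) (z, snd z)"
proof -
  have fin: "\<bar>hfun X z\<bar> \<noteq> \<infinity>" and
    ineq: "\<forall>e>0. \<exists>d>0. \<forall>y. norm (y - z) < d \<longrightarrow>
        hfun X y \<ge> hfun X z + ereal (v \<bullet> (y - z) - e * norm (y - z))"
    using v unfolding frechet_subdiff_def by auto
  obtain r where r: "hfun X z = ereal r" using fin hfun_cases[of X z] by auto
  have Px: "Psi X \<beta> (z, snd z) = ereal r" unfolding Psi_eq using r by simp
  show ?thesis unfolding frechet_subdiff_def mem_Collect_eq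
  proof (intro conjI allI impI)
    show "\<bar>Psi X \<beta> (z, snd z)\<bar> \<noteq> \<infinity>" using Px by simp
    fix e :: real assume e: "e > 0"
    then obtain d where d: "d > 0" and dd: "\<forall>y. norm (y - z) < d \<longrightarrow>
        hfun X y \<ge> hfun X z + ereal (v \<bullet> (y - z) - e * norm (y - z))"
      using ineq by blast
    show "\<exists>d>0. \<forall>y. norm (y - (z, snd z)) < d \<longrightarrow>
        Psi X \<beta> y \<ge> Psi X \<beta> (z, snd z) + ereal ((v, 0) \<bullet> (y - (z, snd z)) - e * norm (y - (z, snd z)))"
    proof (intro exI[of _ d] conjI allI impI)
      show "d > 0" by fact
      fix y :: "_ \<times> _" assume y: "norm (y - (z, snd z)) < d"
      have le: "norm (fst y - z) \<le> norm (y - (z, snd z))"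
        using norm_fst_le[of "fst y - z" "snd y - snd z"] by (cases y) simp
      have h1: "hfun X (fst y) \<ge> ereal r + ereal (v \<bullet> (fst y - z) - e * norm (fst y - z))"
        using dd[rule_format, of "fst y"] le y r by simp
      have inn: "(v, 0) \<bullet> (y - (z, snd z)) = v \<bullet> (fst y - z)"
        by (cases y) (simp add: inner_Pair)
      have h3: "e * norm (fst y - z) \<le> e * norm (y - (z, snd z))"
        using le e by (intro mult_left_mono) auto
      have Py: "Psi X \<beta> y = hfun X (fst y) + ereal (\<beta> / 2 * (norm (snd (fst y) - snd y))\<^sup>2)"
        by (rule Psi_eq)
      show "Psi X \<beta> y \<ge> Psi X \<beta> (z, snd z) + ereal ((v, 0) \<bullet> (y - (z, snd z)) - e * norm (y - (z, snd z)))"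
      proof (cases "hfun X (fst y) = \<infinity>")
        case True
        thus ?thesis unfolding Py by simp
      next
        case False
        then obtain s where s: "hfun X (fst y) = ereal s" using hfun_cases[of X "fst y"] by auto
        have s1: "s \<ge> r + (v \<bullet> (fst y - z) - e * norm (fst y - z))"
          using h1 s by simp
        have s2: "\<beta> / 2 * (norm (snd (fst y) - snd y))\<^sup>2 \<ge> 0" using b by simp
        show ?thesis unfolding Py Px s inn using s1 s2 h3 by simp
      qed
    qed
  qed
qed

lemma subC:
  assumes w: "((wa, wq), wq') \<in> frechet_subdiff (Psi X \<beta>) ((a, q), q')"
  shows "(wa, wq + wq') \<in> frechet_subdiff (hfun X) (a, q)"
proof -
  let ?x = "((a, q), q')"
  define c where "c = \<beta> / 2 * (norm (q - q'))\<^sup>2"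
  have fin: "\<bar>Psi X \<beta> ?x\<bar> \<noteq> \<infinity>" and
    ineq: "\<forall>e>0. \<exists>d>0. \<forall>y. norm (y - ?x) < d \<longrightarrow>
        Psi X \<beta> y \<ge> Psi X \<beta> ?x + ereal (((wa, wq), wq') \<bullet> (y - ?x) - e * norm (y - ?x))"
    using w unfolding frechet_subdiff_def by auto
  obtain r where r: "hfun X (a, q) = ereal r" using hfun_fin[OF fin] by auto
  have Px: "Psi X \<beta> ?x = ereal (r + c)" unfolding Psi_eq c_def using r by simp
  show ?thesis unfolding frechet_subdiff_def mem_Collect_eq
  proof (intro conjI allI impI)
    show "\<bar>hfun X (a, q)\<bar> \<noteq> \<infinity>" using r by simp
    fix e :: real assume e: "e > 0"
    then obtain d where d: "d > 0" and dd: "\<forall>y. norm (y - ?x) < d \<longrightarrow>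
        Psi X \<beta> y \<ge> Psi X \<beta> ?x + ereal (((wa, wq), wq') \<bullet> (y - ?x) - e/2 * norm (y - ?x))"
      using ineq by (metis half_gt_zero)
    show "\<exists>d>0. \<forall>y. norm (y - (a, q)) < d \<longrightarrow>
        hfun X y \<ge> hfun X (a, q) + ereal ((wa, wq + wq') \<bullet> (y - (a, q)) - e * norm (y - (a, q)))"
    proof (intro exI[of _ "d/2"] conjI allI impI)
      show "d/2 > 0" using d by simp
      fix y1 :: "_ \<times> _" assume y1: "norm (y1 - (a, q)) < d/2"
      obtain yP yQ where y1e: "y1 = (yP, yQ)" by (cases y1)
      define y where "y = ((yP, yQ), q' + (yQ - q))"
      have yx: "y - ?x = (y1 - (a, q), yQ - q)" unfolding y_def y1e by simp
      have nQ: "norm (yQ - q) \<le> norm (y1 - (a, q))"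
        using norm_snd_le[of "yQ - q" "yP - a"] unfolding y1e by simp
      have nyx: "norm (y - ?x) \<le> 2 * norm (y1 - (a, q))"
        unfolding yx using norm_Pair_le[of "y1 - (a, q)" "yQ - q"] nQ by simp
      have h1: "Psi X \<beta> y \<ge> ereal (r + c) + ereal (((wa, wq), wq') \<bullet> (y - ?x) - e/2 * norm (y - ?x))"
        using dd[rule_format, of y] nyx y1 Px by simp
      have inn: "((wa, wq), wq') \<bullet> (y - ?x) = (wa, wq + wq') \<bullet> (y1 - (a, q))"
        unfolding yx y1e by (simp add: inner_add_left)
      have h3: "e/2 * norm (y - ?x) \<le> e * norm (y1 - (a, q))"
        using mult_left_mono[OF nyx, of "e/2"] e by simp
      have Py: "Psi X \<beta> y = hfun X y1 + ereal c"
        unfolding Psi_eq y_def c_def y1e by (simp add: algebra_simps)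
      show "hfun X y1 \<ge> hfun X (a, q) + ereal ((wa, wq + wq') \<bullet> (y1 - (a, q)) - e * norm (y1 - (a, q)))"
      proof (cases "hfun X y1 = \<infinity>")
        case True
        thus ?thesis by simp
      next
        case False
        then obtain s where s: "hfun X y1 = ereal s" using hfun_cases[of X y1] by auto
        have "s + c \<ge> r + c + (((wa, wq), wq') \<bullet> (y - ?x) - e/2 * norm (y - ?x))"
          using h1 unfolding Py s by simp
        thus ?thesis unfolding r s inn using h3 inn by simp
      qed
    qed
  qed
qed

theorem lemma2:
  fixes X :: "real^'n^'d" and P :: "real^'k^'n" and Q Q' :: "real^'k^'d" and \<beta> :: real
  assumes "CARD('k) \<le> CARD('n)" and "CARD('k) \<le> CARD('d)"
    and "\<beta> > 0"
    and "P \<in> sign_mats" and "Q \<in> stiefel"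
  shows "(limiting_critical (Psi X \<beta>) ((P, Q), Q') \<longrightarrow> Q = Q') \<and>
         (limiting_critical (Psi X \<beta>) ((P, Q), Q) \<longleftrightarrow> limiting_critical (hfun X) (P, Q))"
proof (intro conjI impI iffI)
  have b: "\<beta> > 0" by fact
  {
    assume "limiting_critical (Psi X \<beta>) ((P, Q), Q')"
    then obtain xs vs where xs: "xs \<longlonglongrightarrow> ((P, Q), Q')"
      and vs: "\<And>k. vs k \<in> frechet_subdiff (Psi X \<beta>) (xs k)" and v0: "vs \<longlonglongrightarrow> 0"
      unfolding limiting_critical_def limiting_subdiff_def mem_Collect_eq by (elim conjE exE) (rule that, assumption+, blast, assumption)
    have eq: "\<And>k. snd (vs k) = \<beta> *\<^sub>R (snd (xs k) - snd (fst (xs k)))"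
      using subA[OF vs b] by blast
    have "(\<lambda>k. snd (vs k)) \<longlonglongrightarrow> snd (0 :: ((real^'k^'n) \<times> (real^'k^'d)) \<times> (real^'k^'d))"
      using v0 by (rule tendsto_snd)
    hence l1: "(\<lambda>k. snd (vs k)) \<longlonglongrightarrow> 0" by simp
    have "(\<lambda>k. \<beta> *\<^sub>R (snd (xs k) - snd (fst (xs k)))) \<longlonglongrightarrow> \<beta> *\<^sub>R (snd ((P, Q), Q') - snd (fst ((P, Q), Q')))"
      by (intro tendsto_intros xs)
    hence l2: "(\<lambda>k. snd (vs k)) \<longlonglongrightarrow> \<beta> *\<^sub>R (Q' - Q)" unfolding eq by simp
    have "\<beta> *\<^sub>R (Q' - Q) = 0" using LIMSEQ_unique[OF l2 l1] .
    thus "Q = Q'" using b by simp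
  }
  {
    assume "limiting_critical (Psi X \<beta>) ((P, Q), Q)"
    then obtain xs vs where fin: "\<bar>Psi X \<beta> ((P, Q), Q)\<bar> \<noteq> \<infinity>" and xs: "xs \<longlonglongrightarrow> ((P, Q), Q)"
      and fx: "(\<lambda>k. Psi X \<beta> (xs k)) \<longlonglongrightarrow> Psi X \<beta> ((P, Q), Q)"
      and vs: "\<And>k. vs k \<in> frechet_subdiff (Psi X \<beta>) (xs k)" and v0: "vs \<longlonglongrightarrow> 0"
      unfolding limiting_critical_def limiting_subdiff_def mem_Collect_eq by (elim conjE exE) (rule that, assumption+, blast, assumption)
    define ws where "ws k = (fst (fst (vs k)), snd (fst (vs k)) + snd (vs k))" for k
    define c where "c k = \<beta> / 2 * (norm (snd (fst (xs k)) - snd (xs k)))\<^sup>2" for k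
    define p where "p k = real_of_ereal (Psi X \<beta> (xs k))" for k
    have ws: "ws k \<in> frechet_subdiff (hfun X) (fst (xs k))" for k
      using subC[of "fst (fst (vs k))" "snd (fst (vs k))" "snd (vs k)" X \<beta>
          "fst (fst (xs k))" "snd (fst (xs k))" "snd (xs k)"] vs[of k]
      unfolding ws_def by simp
    have finxs: "\<bar>Psi X \<beta> (xs k)\<bar> \<noteq> \<infinity>" for k
      using vs[of k] unfolding frechet_subdiff_def by auto
    have hk: "hfun X (fst (xs k)) = ereal (p k - c k)" for k
      using hfun_fin[OF finxs[of k]] unfolding p_def c_def .
    have h0: "hfun X (P, Q) = ereal (real_of_ereal (Psi X \<beta> ((P, Q), Q)))"
      using hfun_fin[OF fin] by simp
    have "(\<lambda>k. ereal (p k)) \<longlonglongrightarrow> ereal (real_of_ereal (Psi X \<beta> ((P, Q), Q)))"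
    proof -
      have "ereal (p k) = Psi X \<beta> (xs k)" for k
        unfolding p_def using finxs[of k] by (cases "Psi X \<beta> (xs k)") auto
      moreover have "ereal (real_of_ereal (Psi X \<beta> ((P, Q), Q))) = Psi X \<beta> ((P, Q), Q)"
        using fin by (cases "Psi X \<beta> ((P, Q), Q)") auto
      ultimately show ?thesis using fx by simp
    qed
    hence lp: "p \<longlonglongrightarrow> real_of_ereal (Psi X \<beta> ((P, Q), Q))" by simp
    have "c \<longlonglongrightarrow> \<beta> / 2 * (norm (snd (fst ((P, Q), Q)) - snd ((P, Q), Q)))\<^sup>2"
      unfolding c_def by (intro tendsto_intros xs)
    hence lc: "c \<longlonglongrightarrow> 0" by simp
    have "(\<lambda>k. p k - c k) \<longlonglongrightarrow> real_of_ereal (Psi X \<beta> ((P, Q), Q)) - 0"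
      by (intro tendsto_diff lp lc)
    hence lh: "(\<lambda>k. hfun X (fst (xs k))) \<longlonglongrightarrow> hfun X (P, Q)"
      unfolding hk h0 by simp
    have "(\<lambda>k. fst (xs k)) \<longlonglongrightarrow> fst ((P, Q), Q)" by (intro tendsto_intros xs)
    hence lx: "(\<lambda>k. fst (xs k)) \<longlonglongrightarrow> (P, Q)" by simp
    have "ws \<longlonglongrightarrow> (fst (fst (0 :: ((real^'k^'n) \<times> (real^'k^'d)) \<times> (real^'k^'d))),
        snd (fst (0 :: ((real^'k^'n) \<times> (real^'k^'d)) \<times> (real^'k^'d))) + snd (0 :: ((real^'k^'n) \<times> (real^'k^'d)) \<times> (real^'k^'d)))"
      unfolding ws_def by (intro tendsto_intros v0)
    hence lw: "ws \<longlonglongrightarrow> 0" by (simp add: zero_prod_def)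
    show "limiting_critical (hfun X) (P, Q)"
      unfolding limiting_critical_def limiting_subdiff_def mem_Collect_eq
      using h0 lx lh ws lw by auto
  }
  {
    assume "limiting_critical (hfun X) (P, Q)"
    then obtain xs vs where fin: "\<bar>hfun X (P, Q)\<bar> \<noteq> \<infinity>" and xs: "xs \<longlonglongrightarrow> (P, Q)"
      and fx: "(\<lambda>k. hfun X (xs k)) \<longlonglongrightarrow> hfun X (P, Q)"
      and vs: "\<And>k. vs k \<in> frechet_subdiff (hfun X) (xs k)" and v0: "vs \<longlonglongrightarrow> 0"
      unfolding limiting_critical_def limiting_subdiff_def mem_Collect_eq by (elim conjE exE) (rule that, assumption+, blast, assumption)
    have eqP: "Psi X \<beta> (z, snd z) = hfun X z" for z unfolding Psi_eq by simp
    have ws: "(vs k, 0) \<in> frechet_subdiff (Psi X \<beta>) (xs k, snd (xs k))" for k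
      using subB[OF vs[of k], of \<beta>] b by simp
    have "(\<lambda>k. (xs k, snd (xs k))) \<longlonglongrightarrow> ((P, Q), snd (P, Q))" by (intro tendsto_intros xs)
    hence lx: "(\<lambda>k. (xs k, snd (xs k))) \<longlonglongrightarrow> ((P, Q), Q)" by simp
    have lw: "(\<lambda>k. (vs k, 0)) \<longlonglongrightarrow> (0, 0)" by (intro tendsto_intros v0)
    have lf: "(\<lambda>k. Psi X \<beta> (xs k, snd (xs k))) \<longlonglongrightarrow> Psi X \<beta> ((P, Q), snd (P, Q))"
      unfolding eqP by (rule fx)
    show "limiting_critical (Psi X \<beta>) ((P, Q), Q)"
      unfolding limiting_critical_def limiting_subdiff_def mem_Collect_eq
    proof (intro conjI exI)
      show "\<bar>Psi X \<beta> ((P, Q), Q)\<bar> \<noteq> \<infinity>" using fin eqP[of "(P, Q)"] by simp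
    qed (use lx lf ws lw in \<open>auto simp: zero_prod_def\<close>)
  }
qed

end
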